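(* Let $x_1,\dots,x_n\in\mathbb{R}^D$ be distinct points, let $\mathbf{f}=(f(x_1),\dots,f(x_n))^\top\in\mathbb{R}^n$ be the values of a function $f$ at these points, and let $\lambda>0$. For each level $l\ge 0$ let $\mathbf{K}^{(l)}\in\mathbb{R}^{n\times n}$ be the Gaussian kernel matrix $[\mathbf{K}^{(l)}]_{ij}=\exp\!\big(-\|x_i-x_j\|^2/(2r_l^2)\big)$ with bandwidth $r_l>0$, let $0<\sigma_{l,n}\le\dots\le\sigma_{l,1}$ be its eigenvalues, and set $\mathbf{P}^{(l)}=\mathbf{K}^{(l)}(\mathbf{K}^{(l)}+\lambda n\mathbf{I})^{-1}$ and $\varepsilon(l)=\sigma_{l,n}/(n\lambda+\sigma_{l,n})$. Let $\hat{\mathbf{f}}^{(0)}\in\mathbb{R}^n$ be the vector of values of the initial (level-$0$) estimator at $x_1,\dots,x_n$, and suppose the Laplacian-pyramid estimators satisfy, at the training points, $\hat{\mathbf{f}}^{(l+1)}=\hat{\mathbf{f}}^{(l)}+\mathbf{P}^{(l)}(\mathbf{f}-\hat{\mathbf{f}}^{(l)})$ for all $l\ge0$ (equivalently $\hat{\mathbf{f}}^{(l+1)}-\mathbf{f}=(\mathbf{I}-\mathbf{P}^{(l)})(\hat{\mathbf{f}}^{(l)}-\mathbf{f})$). Then for every integer $L>0$, $$\|\hat{\mathbf{f}}^{(L+1)}-\mathbf{f}\|\le\prod_{l=0}^{L}(1-\varepsilon(l))\,\|\hat{\mathbf{f}}^{(0)}-\mathbf{f}\|.$$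
   Context: $\|\cdot\|$ is the Euclidean norm on $\mathbb{R}^n$ (and the induced operator norm on matrices). The estimators are those of a Laplacian pyramid formulation of kernel ridge regression with noiseless labels $y_i=f(x_i)$: at each level, kernel ridge regression with kernel $\mathbf{K}^{(l)}$ and regularization $\lambda$ is fit to the current residual $\mathbf{f}-\hat{\mathbf{f}}^{(l)}$ and the fitted values $\mathbf{P}^{(l)}(\mathbf{f}-\hat{\mathbf{f}}^{(l)})$ are added to the estimator. *)

theory Defs
  imports "HOL-Analysis.Analysis"
begin

definition gauss_kernel_matrix :: "('n::finite \<Rightarrow> real^'d) \<Rightarrow> real \<Rightarrow> real^'n^'n" where
  "gauss_kernel_matrix x r = (\<chi> i j. exp (- (norm (x i - x j))\<^sup>2 / (2 * r\<^sup>2)))"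

definition eigenvalues :: "real^'n^'n \<Rightarrow> real set" where
  "eigenvalues A = {\<mu>. \<exists>v. v \<noteq> 0 \<and> A *v v = \<mu> *\<^sub>R v}"

definition min_eigenvalue :: "real^'n^'n \<Rightarrow> real" where
  "min_eigenvalue A = Min (eigenvalues A)"

definition krr_smoother :: "real \<Rightarrow> real^'n::finite^'n \<Rightarrow> real^'n^'n" where
  "krr_smoother lam K = K ** matrix_inv (K + (lam * real CARD('n)) *\<^sub>R mat 1)"

end

theory Submission
  imports Defs "HOL-Library.FuncSet"
begin

lemma quad_expand:
  fixes A :: "real^'n::finite^'n"
  shows "w \<bullet> (A *v w) = (\<Sum>i\<in>UNIV. \<Sum>j\<in>UNIV. w$i * w$j * A$i$j)"
  by (simp add: inner_vec_def matrix_vector_mult_def sum_distrib_left mult_ac)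

lemma pow_kernel_psd:
  fixes y :: "'n::finite \<Rightarrow> real^'d" and u :: "'n \<Rightarrow> real"
  shows "0 \<le> (\<Sum>i\<in>UNIV. \<Sum>j\<in>UNIV. u i * u j * (y i \<bullet> y j)^k)"
proof -
  define G where "G = PiE {..<k} (\<lambda>_. (UNIV::'d set))"
  define \<phi> where "\<phi> g i = (\<Prod>m<k. y i $ g m)" for g i
  have fG: "finite G" unfolding G_def by (simp add: finite_PiE)
  have e: "(y i \<bullet> y j)^k = (\<Sum>g\<in>G. \<phi> g i * \<phi> g j)" for i j
  proof -
    have "(y i \<bullet> y j)^k = (\<Prod>m<k. \<Sum>d\<in>UNIV. y i $ d * y j $ d)"
      by (simp add: inner_vec_def)
    also have "\<dots> = (\<Sum>g\<in>G. \<Prod>m<k. y i $ g m * y j $ g m)"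
      unfolding G_def by (rule prod_sum_PiE) auto
    also have "\<dots> = (\<Sum>g\<in>G. \<phi> g i * \<phi> g j)"
      by (simp add: \<phi>_def prod.distrib)
    finally show ?thesis .
  qed
  have "(\<Sum>i\<in>UNIV. \<Sum>j\<in>UNIV. u i * u j * (y i \<bullet> y j)^k)
      = (\<Sum>i\<in>UNIV. \<Sum>j\<in>UNIV. \<Sum>g\<in>G. (u i * \<phi> g i) * (u j * \<phi> g j))"
    by (simp add: e sum_distrib_left mult_ac)
  also have "\<dots> = (\<Sum>g\<in>G. (\<Sum>i\<in>UNIV. u i * \<phi> g i) * (\<Sum>j\<in>UNIV. u j * \<phi> g j))"
  proof -
    have "(\<Sum>i\<in>UNIV. \<Sum>j\<in>UNIV. \<Sum>g\<in>G. (u i * \<phi> g i) * (u j * \<phi> g j))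
       = (\<Sum>i\<in>UNIV. \<Sum>g\<in>G. \<Sum>j\<in>UNIV. (u i * \<phi> g i) * (u j * \<phi> g j))"
      by (rule sum.cong[OF refl], rule sum.swap)
    also have "\<dots> = (\<Sum>g\<in>G. \<Sum>i\<in>UNIV. \<Sum>j\<in>UNIV. (u i * \<phi> g i) * (u j * \<phi> g j))"
      by (rule sum.swap)
    also have "\<dots> = (\<Sum>g\<in>G. (\<Sum>i\<in>UNIV. u i * \<phi> g i) * (\<Sum>j\<in>UNIV. u j * \<phi> g j))"
      by (simp add: sum_product)
    finally show ?thesis .
  qed
  also have "\<dots> \<ge> 0" by (intro sum_nonneg) simp
  finally show ?thesis by simp
qed

lemma gauss_entry:
  fixes a b :: "real^'d"
  assumes "r > 0"
  shows "exp (- (norm (a - b))\<^sup>2 / (2 * r\<^sup>2))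
     = exp (- (norm a)\<^sup>2 / (2 * r\<^sup>2)) * exp (- (norm b)\<^sup>2 / (2 * r\<^sup>2)) * exp ((a \<bullet> b) / r\<^sup>2)"
proof -
  have n: "(norm (a - b))\<^sup>2 = (norm a)\<^sup>2 + (norm b)\<^sup>2 - 2 * (a \<bullet> b)"
    by (simp add: power2_norm_eq_inner inner_diff_left inner_diff_right inner_commute)
  have eq: "- (norm (a - b))\<^sup>2 / (2 * r\<^sup>2)
     = - (norm a)\<^sup>2 / (2 * r\<^sup>2) + - (norm b)\<^sup>2 / (2 * r\<^sup>2) + (a \<bullet> b) / r\<^sup>2"
    using assms unfolding n by (simp add: field_simps)
  show ?thesis unfolding eq exp_add by (rule refl)
qed

lemma gauss_psd:
  fixes x :: "'n::finite \<Rightarrow> real^'d"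
  assumes r: "r > 0"
  shows "0 \<le> w \<bullet> (gauss_kernel_matrix x r *v w)"
proof -
  define e where "e i = exp (- (norm (x i))\<^sup>2 / (2 * r\<^sup>2))" for i
  define u where "u i = w$i * e i" for i
  define s where "s i j = (x i \<bullet> x j) / r\<^sup>2" for i j
  define F where "F k = (\<Sum>i\<in>UNIV. \<Sum>j\<in>UNIV. u i * u j * (s i j ^ k /\<^sub>R fact k))" for k
  have Q: "w \<bullet> (gauss_kernel_matrix x r *v w) = (\<Sum>i\<in>UNIV. \<Sum>j\<in>UNIV. u i * u j * exp (s i j))"
    unfolding quad_expand gauss_kernel_matrix_def vec_lambda_beta gauss_entry[OF r]
    by (simp add: u_def e_def s_def mult_ac)
  have S: "F sums (\<Sum>i\<in>UNIV. \<Sum>j\<in>UNIV. u i * u j * exp (s i j))"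
    unfolding F_def by (intro sums_sum sums_mult exp_converges)
  have N: "\<forall>k. 0 \<le> F k"
  proof
    fix k
    define c where "c = 1 / (fact k * (r\<^sup>2)^k)"
    have eq: "u i * u j * (s i j ^ k /\<^sub>R fact k) = c * (u i * u j * (x i \<bullet> x j)^k)" for i j
      unfolding c_def s_def power_divide using r by (simp add: field_simps)
    have "F k = c * (\<Sum>i\<in>UNIV. \<Sum>j\<in>UNIV. u i * u j * (x i \<bullet> x j)^k)"
      unfolding F_def eq by (simp only: sum_distrib_left)
    also have "\<dots> \<ge> 0" unfolding c_def by (intro mult_nonneg_nonneg pow_kernel_psd) simp
    finally show "0 \<le> F k" .
  qed
  show ?thesis
    using sums_le[OF _ sums_zero S] N unfolding Q by simp
qed

lemma sym_inner:
  fixes K :: "real^'n::finite^'n"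
  assumes "transpose K = K"
  shows "(K *v u) \<bullet> v = u \<bullet> (K *v v)"
proof -
  have "K *v u = u v* K" using transpose_matrix_vector[of K u] assms by simp
  then show ?thesis by (simp add: dot_lmul_matrix)
qed

lemma smat_mult: "((c::real) *\<^sub>R mat 1) *v (w::real^'n::finite) = c *\<^sub>R w"
  by (simp add: vec_eq_iff matrix_vector_mult_def mat_def if_distrib if_distribR cong: if_cong)

lemma rayleigh_min:
  fixes K :: "real^'n::finite^'n"
  assumes sym: "transpose K = K"
  shows "\<exists>v. v \<noteq> 0 \<and> K *v v = (v \<bullet> (K *v v)) *\<^sub>R v \<and>
     (\<forall>w. (v \<bullet> (K *v v)) * (w \<bullet> w) \<le> w \<bullet> (K *v w))"
proof -
  have "\<exists>v\<in>sphere 0 1. \<forall>y\<in>sphere 0 1. v \<bullet> (K *v v) \<le> y \<bullet> (K *v y)"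
    by (intro continuous_attains_inf compact_sphere continuous_intros)
       (auto intro: linear_continuous_on)
  then obtain v :: "real^'n" where v1: "norm v = 1"
    and vmin: "\<And>y. norm y = 1 \<Longrightarrow> v \<bullet> (K *v v) \<le> y \<bullet> (K *v y)" by auto
  define m where "m = v \<bullet> (K *v v)"
  define q where "q w = w \<bullet> (K *v w) - m * (w \<bullet> w)" for w
  have qnn: "q w \<ge> 0" for w
  proof (cases "w = 0")
    case True then show ?thesis by (simp add: q_def)
  next
    case False
    define y where "y = (1 / norm w) *\<^sub>R w"
    have ny: "norm y = 1" using False by (simp add: y_def)
    have "y \<bullet> (K *v y) = (w \<bullet> (K *v w)) / (norm w)^2"
      by (simp add: y_def matrix_vector_mult_scaleR power2_eq_square)
    with vmin[OF ny] have "m \<le> (w \<bullet> (K *v w)) / (norm w)^2" by (simp add: m_def)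
    then have "m * (norm w)^2 \<le> w \<bullet> (K *v w)" using False by (simp add: field_simps)
    then show ?thesis by (simp add: q_def power2_norm_eq_inner)
  qed
  have qv: "q v = 0" using v1 by (simp add: q_def m_def power2_norm_eq_inner[symmetric])
  define z where "z = K *v v - m *\<^sub>R v"
  have qexp: "q (v + t *\<^sub>R z) = q v + 2 * t * (z \<bullet> z) + t^2 * q z" for t
  proof -
    have "(K *v z) \<bullet> v = z \<bullet> (K *v v)" by (rule sym_inner[OF sym])
    then show ?thesis
      by (simp add: q_def z_def algebra_simps inner_add_left inner_add_right
          inner_diff_left inner_diff_right matrix_vector_mult_scaleR power2_eq_square inner_commute)
  qed
  have "z \<bullet> z = 0"
  proof (rule ccontr)
    assume ne: "z \<bullet> z \<noteq> 0"
    then have zp: "z \<bullet> z > 0" by (simp add: order_le_neq_trans[OF inner_ge_zero] )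
    define t where "t = - (z \<bullet> z) / (q z + 1)"
    have qz: "q z \<ge> 0" by (rule qnn)
    have "0 \<le> 2 * t * (z \<bullet> z) + t^2 * q z" using qnn[of "v + t *\<^sub>R z"] qexp[of t] qv by simp
    moreover have "2 * t * (z \<bullet> z) + t^2 * q z < 0"
    proof -
      have "2 * t * (z \<bullet> z) + t^2 * q z = t * (2 * (z \<bullet> z) + t * q z)" by (simp add: power2_eq_square algebra_simps)
      moreover have "t < 0" using zp qz by (simp add: t_def field_simps)
      moreover have "t * q z > - (z \<bullet> z)" using zp qz by (simp add: t_def field_simps)
      moreover have "2 * (z \<bullet> z) + t * q z > 0" using calculation(3) zp by linarith
      ultimately show ?thesis by (simp add: mult_neg_pos)
    qed
    ultimately show False by linarith
  qed
  then have "z = 0" by simp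
  then have "K *v v = m *\<^sub>R v" by (simp add: z_def)
  moreover have "v \<noteq> 0" using v1 by auto
  moreover have "\<forall>w. m * (w \<bullet> w) \<le> w \<bullet> (K *v w)" using qnn by (simp add: q_def)
  ultimately show ?thesis by (auto simp: m_def)
qed

lemma min_eig:
  fixes K :: "real^'n::finite^'n"
  assumes sym: "transpose K = K" and v0: "v \<noteq> 0" and ev: "K *v v = m *\<^sub>R v"
    and ray: "\<forall>w. m * (w \<bullet> w) \<le> w \<bullet> (K *v w)"
  shows "min_eigenvalue K = m"
proof -
  let ?S = "eigenvalues K"
  have mS: "m \<in> ?S" using v0 ev by (auto simp: eigenvalues_def)
  have low: "m \<le> \<mu>" if "\<mu> \<in> ?S" for \<mu>
  proof -
    from that obtain u where u0: "u \<noteq> 0" and eu: "K *v u = \<mu> *\<^sub>R u" by (auto simp: eigenvalues_def)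
    have "m * (u \<bullet> u) \<le> \<mu> * (u \<bullet> u)" using ray[rule_format, of u] eu by simp
    moreover have "u \<bullet> u > 0" using u0 by simp
    ultimately show ?thesis by simp
  qed
  define e where "e \<mu> = (SOME u. u \<noteq> 0 \<and> K *v u = \<mu> *\<^sub>R u)" for \<mu>
  have eP: "e \<mu> \<noteq> 0 \<and> K *v e \<mu> = \<mu> *\<^sub>R e \<mu>" if "\<mu> \<in> ?S" for \<mu>
    unfolding e_def by (rule someI_ex) (use that in \<open>auto simp: eigenvalues_def\<close>)
  have inj: "inj_on e ?S"
  proof (rule inj_onI)
    fix a b assume a: "a \<in> ?S" and b: "b \<in> ?S" and eq: "e a = e b"
    have "a *\<^sub>R e a = b *\<^sub>R e a" using eP[OF a] eP[OF b] eq by metis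
    then show "a = b" using eP[OF a] by (simp add: scaleR_cancel_right)
  qed
  have orth: "pairwise orthogonal (e ` ?S)"
  proof (clarsimp simp: pairwise_def)
    fix a b assume a: "a \<in> ?S" and b: "b \<in> ?S" and ne: "e a \<noteq> e b"
    have "(K *v e a) \<bullet> e b = e a \<bullet> (K *v e b)" by (rule sym_inner[OF sym])
    then have "a * (e a \<bullet> e b) = b * (e a \<bullet> e b)" using eP[OF a] eP[OF b] by simp
    moreover have "a \<noteq> b" using ne by auto
    ultimately show "orthogonal (e a) (e b)" by (simp add: orthogonal_def)
  qed
  have "0 \<notin> e ` ?S" using eP by auto
  then have "independent (e ` ?S)" using orth pairwise_orthogonal_independent by blast
  then have "finite (e ` ?S)" by (rule finiteI_independent)
  then have fin: "finite ?S" using inj by (rule finite_imageD)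
  show ?thesis unfolding min_eigenvalue_def by (rule Min_eqI[OF fin low mS])
qed

lemma step:
  fixes K :: "real^'n::finite^'n"
  assumes sym: "transpose K = K" and psd: "\<And>w. 0 \<le> w \<bullet> (K *v w)" and c: "c > 0"
  shows "norm (E - (K ** matrix_inv (K + c *\<^sub>R mat 1)) *v E)
     \<le> (1 - min_eigenvalue K / (c + min_eigenvalue K)) * norm E"
proof -
  obtain v where v0: "v \<noteq> 0" and ev: "K *v v = (v \<bullet> (K *v v)) *\<^sub>R v"
    and ray: "\<forall>w. (v \<bullet> (K *v v)) * (w \<bullet> w) \<le> w \<bullet> (K *v w)"
    using rayleigh_min[OF sym] by blast
  define s where "s = min_eigenvalue K"
  have sdef: "s = v \<bullet> (K *v v)" unfolding s_def by (rule min_eig[OF sym v0 ev ray])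
  have s0: "s \<ge> 0" using psd sdef by simp
  define A where "A = K + c *\<^sub>R mat 1"
  have Aw: "A *v w = K *v w + c *\<^sub>R w" for w by (simp add: A_def matrix_vector_mult_add_rdistrib smat_mult)
  have lowA: "(s + c) * norm w \<le> norm (A *v w)" for w
  proof -
    have "s * (w \<bullet> w) \<le> w \<bullet> (K *v w)" using ray sdef by simp
    then have "(s + c) * (norm w)^2 \<le> w \<bullet> (A *v w)"
      by (simp add: Aw inner_add_right power2_norm_eq_inner algebra_simps)
    also have "\<dots> \<le> norm w * norm (A *v w)" by (rule norm_cauchy_schwarz)
    finally have h: "(s + c) * (norm w)^2 \<le> norm w * norm (A *v w)" .
    show ?thesis
    proof (cases "w = 0")
      case True then show ?thesis by simp
    next
      case False
      then have "norm w > 0" by simp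
      with h show ?thesis by (simp add: power2_eq_square mult.assoc mult.left_commute[of "norm w"])
    qed
  qed
  have "inj ((*v) A)"
  proof (rule injI)
    fix a b assume "A *v a = A *v b"
    then have "A *v (a - b) = 0" by (simp add: matrix_vector_mult_diff_distrib)
    then have "(s + c) * norm (a - b) \<le> 0" using lowA[of "a - b"] by simp
    moreover have "s + c > 0" using s0 c by simp
    ultimately show "a = b" by (simp add: mult_le_0_iff)
  qed
  then have "invertible A"
    using matrix_left_invertible_injective invertible_left_inverse by blast
  then have inv: "A ** matrix_inv A = mat 1 \<and> matrix_inv A ** A = mat 1"
    unfolding invertible_def matrix_inv_def by (rule someI_ex)
  define w where "w = matrix_inv A *v E"
  have Ew: "A *v w = E" unfolding w_def matrix_vector_mul_assoc using inv by simp
  have "E - (K ** matrix_inv A) *v E = c *\<^sub>R w"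
  proof -
    have "(K ** matrix_inv A) *v E = K *v w" by (simp add: w_def matrix_vector_mul_assoc)
    moreover have "E = K *v w + c *\<^sub>R w" using Ew Aw by simp
    ultimately show ?thesis by simp
  qed
  then have "norm (E - (K ** matrix_inv A) *v E) = c * norm w" using c by simp
  also have "\<dots> \<le> c * (norm E / (s + c))"
  proof -
    have "norm w \<le> norm E / (s + c)" using lowA[of w] Ew s0 c by (simp add: field_simps)
    then show ?thesis using c by (intro mult_left_mono) auto
  qed
  also have "\<dots> = (1 - s / (c + s)) * norm E" using s0 c by (simp add: field_simps)
  finally show ?thesis by (simp add: A_def s_def)
qed

lemma min_eig_nonneg:
  fixes K :: "real^'n::finite^'n"
  assumes sym: "transpose K = K" and psd: "\<And>w. 0 \<le> w \<bullet> (K *v w)"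
  shows "min_eigenvalue K \<ge> 0"
proof -
  obtain v where v0: "v \<noteq> 0" and ev: "K *v v = (v \<bullet> (K *v v)) *\<^sub>R v"
    and ray: "\<forall>w. (v \<bullet> (K *v v)) * (w \<bullet> w) \<le> w \<bullet> (K *v w)"
    using rayleigh_min[OF sym] by blast
  show ?thesis using min_eig[OF sym v0 ev ray] psd[of v] by simp
qed

lemma gauss_sym: "transpose (gauss_kernel_matrix x r) = gauss_kernel_matrix x r"
  by (simp add: transpose_def gauss_kernel_matrix_def vec_eq_iff norm_minus_commute)

theorem theorem1:
  fixes x :: "'n::finite \<Rightarrow> real^'d"
    and f :: "real^'d \<Rightarrow> real"
    and lam :: real
    and r :: "nat \<Rightarrow> real"
    and fhat :: "nat \<Rightarrow> real^'n"
    and L :: nat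
  assumes distinct: "inj x"
    and lam_pos: "lam > 0"
    and r_pos: "\<And>l. r l > 0"
    and rec: "\<And>l. fhat (Suc l) = fhat l
        + krr_smoother lam (gauss_kernel_matrix x (r l)) *v ((\<chi> i. f (x i)) - fhat l)"
    and L_pos: "L > 0"
  shows "norm (fhat (L + 1) - (\<chi> i. f (x i)))
    \<le> (\<Prod>l = 0..L. 1 - min_eigenvalue (gauss_kernel_matrix x (r l))
          / (real CARD('n) * lam + min_eigenvalue (gauss_kernel_matrix x (r l))))
       * norm (fhat 0 - (\<chi> i. f (x i)))"
proof -
  define fv where "fv = (\<chi> i. f (x i))"
  define c where "c = lam * real CARD('n)"
  define \<rho> where "\<rho> l = 1 - min_eigenvalue (gauss_kernel_matrix x (r l))
          / (real CARD('n) * lam + min_eigenvalue (gauss_kernel_matrix x (r l)))" for l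
  have c0: "c > 0" using lam_pos by (simp add: c_def)
  have one: "norm (fhat (Suc l) - fv) \<le> \<rho> l * norm (fhat l - fv)" for l
  proof -
    let ?K = "gauss_kernel_matrix x (r l)"
    have "fhat (Suc l) - fv = (fhat l - fv) - (?K ** matrix_inv (?K + c *\<^sub>R mat 1)) *v (fhat l - fv)"
      unfolding rec krr_smoother_def c_def fv_def by (simp add: matrix_vector_mult_diff_distrib)
    also have "norm \<dots> \<le> (1 - min_eigenvalue ?K / (c + min_eigenvalue ?K)) * norm (fhat l - fv)"
      by (rule step[OF gauss_sym gauss_psd[OF r_pos] c0])
    finally show ?thesis by (simp add: \<rho>_def c_def mult.commute)
  qed
  have rho0: "\<rho> l \<ge> 0" for l
  proof -
    have s: "min_eigenvalue (gauss_kernel_matrix x (r l)) \<ge> 0"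
      by (rule min_eig_nonneg[OF gauss_sym gauss_psd[OF r_pos]])
    have "min_eigenvalue (gauss_kernel_matrix x (r l))
          / (real CARD('n) * lam + min_eigenvalue (gauss_kernel_matrix x (r l))) \<le> 1"
      using s c0 by (simp add: c_def divide_le_eq_1 mult.commute)
    then show ?thesis by (simp add: \<rho>_def)
  qed
  have "norm (fhat (Suc M) - fv) \<le> (\<Prod>l = 0..M. \<rho> l) * norm (fhat 0 - fv)" for M
  proof (induction M)
    case 0 then show ?case using one[of 0] by simp
  next
    case (Suc M)
    have "norm (fhat (Suc (Suc M)) - fv) \<le> \<rho> (Suc M) * norm (fhat (Suc M) - fv)" by (rule one)
    also have "\<dots> \<le> \<rho> (Suc M) * ((\<Prod>l = 0..M. \<rho> l) * norm (fhat 0 - fv))"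
      using Suc.IH rho0 by (intro mult_left_mono) auto
    also have "\<dots> = (\<Prod>l = 0..Suc M. \<rho> l) * norm (fhat 0 - fv)"
      by (simp add: prod.atLeast0_atMost_Suc mult_ac)
    finally show ?case .
  qed
  then show ?thesis unfolding \<rho>_def fv_def by simp
qed

end
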